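(* Let $R>0$, $D>0$, $k\ge0$ an integer and $n\ge k+2$. For every algorithm $\mathcal A\in\mathfrak A_{\mathrm{sep}}$, $$\sup\ \|\nabla\mathbf L(\mathbf z^k)\|^2\ \ge\ \frac{R^2D^2}{(2\lfloor k/2\rfloor+1)^2},$$ where the supremum is over all $R$-smooth convex-concave $\mathbf L$ on $\mathbb R^n\times\mathbb R^n$ having a saddle point $\mathbf z^\star$ and all starting points $\mathbf z^0$ with $\|\mathbf z^0-\mathbf z^\star\|\le D$, and $\mathbf z^k$ is the $k$-th iterate of $\mathcal A$ applied to $\mathbf L$ from $\mathbf z^0$. Consequently, the EAG-C and EAG-V algorithms, which achieve $\|\nabla\mathbf L(\mathbf z^k)\|^2=\mathcal O(R^2\|\mathbf z^0-\mathbf z^\star\|^2/k^2)$, are optimal up to a constant factor in $\mathfrak A_{\mathrm{sep}}$.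
   Context: Write $\mathbf z=(\mathbf x,\mathbf y)$. $\mathbf L$ convex-concave: convex in $\mathbf x$ for fixed $\mathbf y$, concave in $\mathbf y$ for fixed $\mathbf x$; a saddle point $(\mathbf x^\star,\mathbf y^\star)$ satisfies $\mathbf L(\mathbf x^\star,\mathbf y)\le\mathbf L(\mathbf x^\star,\mathbf y^\star)\le\mathbf L(\mathbf x,\mathbf y^\star)$ for all $\mathbf x,\mathbf y$. $\mathbf G(\mathbf z)=(\nabla_{\mathbf x}\mathbf L,-\nabla_{\mathbf y}\mathbf L)$; $R$-smooth means $\mathbf G$ is $R$-Lipschitz. A deterministic algorithm produces $\mathbf z^j=\mathcal A(\mathbf z^0,\dots,\mathbf z^{j-1};\mathbf L)$; $\mathfrak A_{\mathrm{sep}}$ is the class of such algorithms with $\mathbf x^j\in\mathbf x^0+\mathrm{span}\{\nabla_{\mathbf x}\mathbf L(\mathbf z^0),\dots,\nabla_{\mathbf x}\mathbf L(\mathbf z^{j-1})\}$ and $\mathbf y^j\in\mathbf y^0+\mathrm{span}\{\nabla_{\mathbf y}\mathbf L(\mathbf z^0),\dots,\nabla_{\mathbf y}\mathbf L(\mathbf z^{j-1})\}$ for all $j\ge1$. EAG-C: $\mathbf z^{k+1/2}=\mathbf z^k+\frac1{k+2}(\mathbf z^0-\mathbf z^k)-\alpha\mathbf G(\mathbf z^k)$, $\mathbf z^{k+1}=\mathbf z^k+\frac1{k+2}(\mathbf z^0-\mathbf z^k)-\alpha\mathbf G(\mathbf z^{k+1/2})$ with constant $\alpha$; EAG-V is the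 same with step-sizes $\alpha_k$ given by $\alpha_{k+1}=\alpha_k\big(1-\frac{1}{(k+1)(k+3)}\frac{\alpha_k^2R^2}{1-\alpha_k^2R^2}\big)$. *)

theory Defs
  imports "HOL-Analysis.Analysis"
begin

text \<open>Points z = (x, y) live in R^n x R^n, rendered as real^'n \<times> real^'n
  (norm of a pair is the Euclidean norm sqrt(|x|^2 + |y|^2)).\<close>

type_synonym 'n pt = "(real^'n) \<times> (real^'n)"

text \<open>Gradient of a real-valued function (meaningful where it is differentiable).\<close>
definition grad :: "('a::real_inner \<Rightarrow> real) \<Rightarrow> 'a \<Rightarrow> 'a" where
  "grad f z = (SOME g. GDERIV f z :> g)"

definition saddle_op :: "(('n::finite) pt \<Rightarrow> real) \<Rightarrow> 'n pt \<Rightarrow> 'n pt" where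
  "saddle_op L z = (fst (grad L z), - snd (grad L z))"

definition convex_concave :: "(('n::finite) pt \<Rightarrow> real) \<Rightarrow> bool" where
  "convex_concave L \<longleftrightarrow>
     (\<forall>y. convex_on UNIV (\<lambda>x. L (x, y))) \<and> (\<forall>x. concave_on UNIV (\<lambda>y. L (x, y)))"

definition R_smooth :: "real \<Rightarrow> (('n::finite) pt \<Rightarrow> real) \<Rightarrow> bool" where
  "R_smooth R L \<longleftrightarrow> (\<forall>z. L differentiable (at z)) \<and> R-lipschitz_on UNIV (saddle_op L)"

definition saddle_point :: "(('n::finite) pt \<Rightarrow> real) \<Rightarrow> 'n pt \<Rightarrow> bool" where
  "saddle_point L zs \<longleftrightarrow>
     (\<forall>x y. L (fst zs, y) \<le> L zs \<and> L zs \<le> L (x, snd zs))"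

type_synonym 'n algorithm = "'n pt list \<Rightarrow> (('n::finite) pt \<Rightarrow> real) \<Rightarrow> 'n pt"

fun alg_traj ::"('n::finite) algorithm \<Rightarrow> (('n::finite) pt \<Rightarrow> real) \<Rightarrow> 'n pt \<Rightarrow> nat \<Rightarrow> 'n pt list" where
  "alg_traj A L z0 0 = [z0]"
| "alg_traj A L z0 (Suc j) = alg_traj A L z0 j @ [A (alg_traj A L z0 j) L]"

definition alg_iter ::"('n::finite) algorithm \<Rightarrow> (('n::finite) pt \<Rightarrow> real) \<Rightarrow> 'n pt \<Rightarrow> nat \<Rightarrow> 'n pt" where
  "alg_iter A L z0 j = last (alg_traj A L z0 j)"

definition alg_sep ::"('n::finite) algorithm \<Rightarrow> bool" where
  "alg_sep A \<longleftrightarrow> (\<forall>L z0 j. (\<forall>z. L differentiable (at z)) \<longrightarrow> j \<ge> 1 \<longrightarrow>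
      fst (alg_iter A L z0 j) - fst z0 \<in> span {fst (grad L (alg_iter A L z0 i)) | i. i < j} \<and>
      snd (alg_iter A L z0 j) - snd z0 \<in> span {snd (grad L (alg_iter A L z0 i)) | i. i < j})"

end

theory Submission
  imports Defs "HOL-Computational_Algebra.Polynomial"
begin

fun Sch :: "nat \<Rightarrow> real poly" where
  "Sch 0 = 1"
| "Sch (Suc 0) = [:-3, 4:]"
| "Sch (Suc (Suc m)) = [:-2, 4:] * Sch (Suc m) - Sch m"

lemma Sch_degree: "degree (Sch m) \<le> m"
proof (induction m rule: Sch.induct)
  case (3 m)
  have "degree ([:-2, 4:] * Sch (Suc m)) \<le> Suc (Suc m)"
    using degree_mult_le[of "[:-2, 4:]" "Sch (Suc m)"] 3(1) by simp
  moreover have "degree (Sch m) \<le> Suc (Suc m)" using 3(2) by simp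
  ultimately show ?case using degree_diff_le by (simp add: degree_diff_le)
qed auto

lemma Sch_zero: "poly (Sch m) 0 = (-1)^m * (2 * real m + 1)"
  by (induction m rule: Sch.induct) (auto simp: algebra_simps)

lemma Sch_cos: "cos th * poly (Sch m) ((cos th)^2) = cos ((2 * real m + 1) * th)"
proof (induction m rule: Sch.induct)
  case 1 then show ?case by simp
next
  case 2
  have "cos (3 * th) = 4 * cos th ^ 3 - 3 * cos th" by (rule cos_treble_cos)
  then show ?case by (simp add: algebra_simps power3_eq_cube power2_eq_square)
next
  case (3 m)
  have e: "cos ((2 * real m + 5) * th) + cos ((2 * real m + 1) * th)
        = 2 * cos (2 * th) * cos ((2 * real m + 3) * th)"
  proof -
    have a: "((2 * real m + 5) * th + (2 * real m + 1) * th) / 2 = (2 * real m + 3) * th"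
      by (simp add: algebra_simps)
    have b: "((2 * real m + 5) * th - (2 * real m + 1) * th) / 2 = 2 * th"
      by (simp add: algebra_simps)
    show ?thesis
      using cos_plus_cos[of "(2 * real m + 5) * th" "(2 * real m + 1) * th"]
      unfolding a b by simp
  qed
  have c2: "2 * cos (2 * th) = 4 * (cos th)^2 - 2" by (simp add: cos_double_cos)
  have "cos th * poly (Sch (Suc (Suc m))) ((cos th)^2)
     = (4 * (cos th)^2 - 2) * (cos th * poly (Sch (Suc m)) ((cos th)^2)) - cos th * poly (Sch m) ((cos th)^2)"
    by (simp add: algebra_simps)
  also have "\<dots> = (4 * (cos th)^2 - 2) * cos ((2 * real m + 3) * th) - cos ((2 * real m + 1) * th)"
    using 3 by (simp add: algebra_simps)
  also have "\<dots> = 2 * cos (2 * th) * cos ((2 * real m + 3) * th) - cos ((2 * real m + 1) * th)"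
    by (simp only: c2[symmetric])
  also have "\<dots> = cos ((2 * real m + 5) * th)" using e by linarith
  finally show ?case by (simp add: algebra_simps)
qed

lemma polyprod: "poly (\<Prod>j\<in>A. [:- t j, 1:]) y = (\<Prod>j\<in>A. (y - (t j::real)))"
  by (simp add: poly_prod)
lemma divprod: "(a::real) / (\<Prod>j\<in>A. (t i - t j)) * (\<Prod>j\<in>A. (y - t j)) = (\<Prod>j\<in>A. (y - t j) / (t i - t j)) * a"
  by (simp only: prod_dividef) simp

lemma lagrange:
  fixes t :: "nat \<Rightarrow> real" and P :: "real poly"
  assumes inj: "inj_on t {..m}" and deg: "degree P \<le> m"
  shows "poly P x = (\<Sum>i\<le>m. (\<Prod>j\<in>{..m}-{i}. (x - t j) / (t i - t j)) * poly P (t i))"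
proof -
  define Q where "Q = (\<Sum>i\<le>m. smult (poly P (t i) / (\<Prod>j\<in>{..m}-{i}. (t i - t j)))
                         (\<Prod>j\<in>{..m}-{i}. [:- t j, 1:]))"
  have pQ: "poly Q y = (\<Sum>i\<le>m. (\<Prod>j\<in>{..m}-{i}. (y - t j) / (t i - t j)) * poly P (t i))" for y
  proof -
    have "poly Q y = (\<Sum>i\<le>m. poly P (t i) / (\<Prod>j\<in>{..m}-{i}. (t i - t j)) * (\<Prod>j\<in>{..m}-{i}. (y - t j)))"
      unfolding Q_def poly_sum poly_smult by (simp only: polyprod)
    also have "\<dots> = (\<Sum>i\<le>m. (\<Prod>j\<in>{..m}-{i}. (y - t j) / (t i - t j)) * poly P (t i))"
      by (simp only: divprod)
    finally show ?thesis .
  qed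
  have dQ: "degree Q \<le> m"
    unfolding Q_def
  proof (intro degree_sum_le)
    fix i assume "i \<in> {..m}"
    have "degree (\<Prod>j\<in>{..m}-{i}. [:- t j, 1:]) \<le> (\<Sum>j\<in>{..m}-{i}. degree [:- t j, 1:])"
      using degree_prod_sum_le[of "{..m}-{i}" "\<lambda>j. [:- t j, 1:]"] by (simp add: o_def)
    also have "\<dots> \<le> m" using \<open>i \<in> {..m}\<close> by simp
    finally show "degree (smult (poly P (t i) / (\<Prod>j\<in>{..m}-{i}. (t i - t j)))
                         (\<Prod>j\<in>{..m}-{i}. [:- t j, 1:])) \<le> m"
      using degree_smult_le order_trans by blast
  qed simp
  have agree: "poly P y = poly Q y" if "y \<in> t ` {..m}" for y
  proof -
    from that obtain l where l: "l \<le> m" "y = t l" by auto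
    have "poly Q (t l) = (\<Sum>i\<in>{l}. (\<Prod>j\<in>{..m}-{i}. (t l - t j) / (t i - t j)) * poly P (t i))"
    proof (unfold pQ, rule sum.mono_neutral_right)
      show "\<forall>i\<in>{..m} - {l}. (\<Prod>j\<in>{..m}-{i}. (t l - t j) / (t i - t j)) * poly P (t i) = 0"
      proof
        fix i assume "i \<in> {..m} - {l}"
        then have "l \<in> {..m}-{i}" using l by auto
        then have "(\<Prod>j\<in>{..m}-{i}. (t l - t j) / (t i - t j)) = 0"
          by (intro prod_zero) auto
        then show "(\<Prod>j\<in>{..m}-{i}. (t l - t j) / (t i - t j)) * poly P (t i) = 0"
          by simp
      qed
    qed (use l in auto)
    also have "\<dots> = poly P (t l)"
    proof -
      have "(t l - t j) / (t l - t j) = 1" if "j \<in> {..m}-{l}" for j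
        using that l inj by (auto simp: inj_on_def)
      then show ?thesis by simp
    qed
    finally show ?thesis using l by simp
  qed
  have cardA: "card (t ` {..m}) = Suc m" using inj by (simp add: card_image)
  have "P = Q" by (rule poly_eqI_degree[OF agree]) (use cardA deg dQ in auto)
  then have "poly P x = poly Q x" by simp
  then show ?thesis using pQ[of x] by linarith
qed

lemma lagrange0:
  fixes t :: "nat \<Rightarrow> real" and P :: "real poly"
  assumes inj: "inj_on t {..m}" and deg: "degree P \<le> m"
  shows "poly P 0 = (\<Sum>i\<le>m. (\<Prod>j\<in>{..m}-{i}. t j / (t j - t i)) * poly P (t i))"
proof -
  have eq: "\<And>a b. (0 - a) / (b - a) = a / (a - (b::real))"
    by (metis diff_0 divide_minus_right minus_diff_eq minus_divide_left)
  show ?thesis using lagrange[OF inj deg, of 0] unfolding eq .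
qed

definition xn :: "nat \<Rightarrow> nat \<Rightarrow> real" where
  "xn m i = cos (real i * pi / (2 * real m + 1))"
definition tn :: "nat \<Rightarrow> nat \<Rightarrow> real" where
  "tn m i = (xn m i)^2"
definition cc :: "nat \<Rightarrow> nat \<Rightarrow> real" where
  "cc m i = (\<Prod>j\<in>{..m}-{i}. tn m j / (tn m j - tn m i))"

lemma xn_pos: "i \<le> m \<Longrightarrow> 0 < xn m i"
proof -
  assume "i \<le> m"
  have h: "2 * real i < 2 * real m + 1" using \<open>i \<le> m\<close> by simp
  have "2 * real i * pi < (2 * real m + 1) * pi" by (rule mult_strict_right_mono[OF h pi_gt_zero])
  then have "real i * pi / (2 * real m + 1) < pi / 2"
    by (simp add: field_simps)
  moreover have "0 \<le> real i * pi / (2 * real m + 1)" by simp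
  moreover have "0 \<le> real i * pi / (2 * real m + 1)" by simp
  moreover have "-(pi/2) < 0" using pi_gt_zero by simp
  ultimately show ?thesis unfolding xn_def by (intro cos_gt_zero_pi) linarith+
qed

lemma xn_le1: "xn m i \<le> 1" unfolding xn_def by simp

lemma xn_decr: "i < j \<Longrightarrow> j \<le> m \<Longrightarrow> xn m j < xn m i"
proof -
  assume ij: "i < j" "j \<le> m"
  have h: "real j \<le> 2 * real m + 1" using ij by simp
  have "real j * pi \<le> (2 * real m + 1) * pi" by (rule mult_right_mono[OF h]) simp
  then have "real j * pi / (2 * real m + 1) \<le> pi"
    by (simp add: field_simps)
  moreover have "real i * pi / (2 * real m + 1) < real j * pi / (2 * real m + 1)"
    using ij by (simp add: divide_strict_right_mono)
  ultimately show ?thesis unfolding xn_def by (intro cos_monotone_0_pi) auto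
qed

lemma tn_decr: "i < j \<Longrightarrow> j \<le> m \<Longrightarrow> tn m j < tn m i"
proof -
  assume ij: "i < j" "j \<le> m"
  have "xn m j < xn m i" "0 \<le> xn m j" using xn_decr[OF ij] xn_pos[OF ij(2)] by auto
  then show ?thesis unfolding tn_def by (intro power_strict_mono) auto
qed

lemma tn_inj: "inj_on (tn m) {..m}"
proof (rule inj_onI)
  fix i j assume ij: "i \<in> {..m}" "j \<in> {..m}" "tn m i = tn m j"
  show "i = j"
  proof (rule ccontr)
    assume "i \<noteq> j"
    then consider "i < j" | "j < i" by linarith
    then show False using tn_decr[of i j m] tn_decr[of j i m] ij by cases auto
  qed
qed

lemma cc_moment: "q \<le> m \<Longrightarrow> (\<Sum>i\<le>m. cc m i * tn m i ^ q) = (if q = 0 then 1 else 0)"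
proof -
  assume q: "q \<le> m"
  have "poly (monom 1 q) 0 = (\<Sum>i\<le>m. (\<Prod>j\<in>{..m}-{i}. tn m j / (tn m j - tn m i)) * poly (monom 1 q) (tn m i))"
    by (rule lagrange0[OF tn_inj]) (use q in \<open>simp add: degree_monom_eq\<close>)
  then show ?thesis by (cases "q = 0") (simp_all add: cc_def[symmetric] poly_monom zero_power)
qed

lemma cc_sign: "i \<le> m \<Longrightarrow> 0 < (-1)^(m-i) * cc m i"
proof -
  assume im: "i \<le> m"
  have split: "{..m}-{i} = {..<i} \<union> {i<..m}" using im by auto
  have "cc m i = (\<Prod>j\<in>{..<i}. tn m j / (tn m j - tn m i)) * (\<Prod>j\<in>{i<..m}. tn m j / (tn m j - tn m i))"
    unfolding cc_def split by (subst prod.union_disjoint) auto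
  moreover have "(\<Prod>j\<in>{i<..m}. - (tn m j / (tn m j - tn m i))) = (-1::real)^(m-i) * (\<Prod>j\<in>{i<..m}. tn m j / (tn m j - tn m i))"
  proof -
    have "(\<Prod>j\<in>{i<..m}. - (tn m j / (tn m j - tn m i))) = (\<Prod>j\<in>{i<..m}. (-1) * (tn m j / (tn m j - tn m i)))"
      by simp
    also have "\<dots> = (\<Prod>j\<in>{i<..m}. (-1::real)) * (\<Prod>j\<in>{i<..m}. tn m j / (tn m j - tn m i))"
      by (rule prod.distrib)
    finally show ?thesis by simp
  qed
  ultimately have "(-1)^(m-i) * cc m i = (\<Prod>j\<in>{..<i}. tn m j / (tn m j - tn m i)) * (\<Prod>j\<in>{i<..m}. - (tn m j / (tn m j - tn m i)))"
    by (simp add: algebra_simps)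
  also have "\<dots> > 0"
  proof (intro mult_pos_pos prod_pos ballI)
    fix j assume "j \<in> {..<i}"
    then have "tn m i < tn m j" "0 < tn m j" using tn_decr[of j i m] im xn_pos[of j m] by (auto simp: tn_def)
    then show "0 < tn m j / (tn m j - tn m i)" by simp
  next
    fix j assume "j \<in> {i<..m}"
    then have "tn m j < tn m i" "0 < tn m j" using tn_decr[of i j m] im xn_pos[of j m] by (auto simp: tn_def)
    then have "tn m j / (tn m j - tn m i) < 0" by (intro divide_pos_neg) auto
    then show "0 < - (tn m j / (tn m j - tn m i))" by simp
  qed
  finally show ?thesis .
qed

lemma cc_abs: "i \<le> m \<Longrightarrow> \<bar>cc m i\<bar> = (-1)^m * ((-1)^i * cc m i)"
proof -
  assume im: "i \<le> m"
  have h: "m + i = (m - i) + 2 * i" using im by simp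
  have "(-1::real)^m * (-1)^i = (-1)^(m+i)" by (simp add: power_add)
  also have "\<dots> = (-1)^((m-i) + 2*i)" by (subst h) (rule refl)
  also have "\<dots> = (-1)^(m-i)" by (simp only: power_add power_mult) simp
  finally have "(-1::real)^m * (-1)^i = (-1)^(m-i)" .
  have "\<bar>cc m i\<bar> = \<bar>(-1)^(m-i) * cc m i\<bar>" by (simp add: abs_mult)
  also have "\<dots> = (-1)^(m-i) * cc m i" using cc_sign[OF im] by simp
  finally show ?thesis using \<open>(-1::real)^m * (-1)^i = (-1)^(m-i)\<close> by (simp add: mult.assoc[symmetric])
qed

lemma sum_abs_cc: "(\<Sum>i\<le>m. \<bar>cc m i\<bar> / xn m i) = 2 * real m + 1"
proof -
  have node: "poly (Sch m) (tn m i) = (-1)^i / xn m i" if "i \<le> m" for i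
  proof -
    have "xn m i * poly (Sch m) (tn m i) = cos ((2 * real m + 1) * (real i * pi / (2 * real m + 1)))"
      unfolding tn_def using Sch_cos[of "real i * pi / (2 * real m + 1)" m] by (simp add: xn_def)
    also have "\<dots> = cos (real i * pi)"
    proof -
      have "(2 * real m + 1) * (real i * pi / (2 * real m + 1)) = real i * pi"
        by (simp only: times_divide_eq_right) (rule nonzero_mult_div_cancel_left; simp)
      then show ?thesis by simp
    qed
    also have "\<dots> = (-1)^i" by simp
    finally show ?thesis using xn_pos[OF that] by (simp add: field_simps)
  qed
  have "poly (Sch m) 0 = (\<Sum>i\<le>m. (\<Prod>j\<in>{..m}-{i}. tn m j / (tn m j - tn m i)) * poly (Sch m) (tn m i))"
    by (rule lagrange0[OF tn_inj Sch_degree])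
  also have "\<dots> = (\<Sum>i\<le>m. cc m i * ((-1)^i / xn m i))"
    unfolding cc_def[symmetric] by (intro sum.cong refl) (simp add: node)
  finally have e: "(-1)^m * (2 * real m + 1) = (\<Sum>i\<le>m. cc m i * ((-1)^i / xn m i))"
    using Sch_zero by simp
  have "(\<Sum>i\<le>m. \<bar>cc m i\<bar> / xn m i) = (-1)^m * (\<Sum>i\<le>m. cc m i * ((-1)^i / xn m i))"
    unfolding sum_distrib_left by (intro sum.cong refl) (simp add: cc_abs)
  also have "\<dots> = (-1)^m * ((-1)^m * (2 * real m + 1))" using e by simp
  also have "\<dots> = 2 * real m + 1" by (simp add: mult.assoc[symmetric] power_add[symmetric])
  finally show ?thesis .
qed

definition Bop :: "('n::finite \<Rightarrow> real) \<Rightarrow> real^'n \<Rightarrow> real^'n" where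
  "Bop s v = (\<chi> a. s a * v $ a)"

definition pv :: "('n::finite \<Rightarrow> real) \<Rightarrow> real^'n \<Rightarrow> nat \<Rightarrow> real^'n" where
  "pv s b l = (\<chi> a. s a ^ l * b $ a)"

definition Lf :: "('n::finite \<Rightarrow> real) \<Rightarrow> real^'n \<Rightarrow> 'n pt \<Rightarrow> real" where
  "Lf s b z = inner (Bop s (fst z)) (snd z) - inner b (snd z)"

lemma Bop_linear: "linear (Bop s)"
  by (rule linearI) (simp_all add: Bop_def vec_eq_iff algebra_simps)

lemma Bop_bl: "bounded_linear (Bop s)"
  using Bop_linear linear_conv_bounded_linear by blast

lemma Bop_sym: "inner (Bop s u) v = inner u (Bop s v)"
  unfolding inner_vec_def Bop_def by (simp add: algebra_simps)

lemma Bop_pv: "Bop s (pv s b l) = pv s b (Suc l)"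
  unfolding Bop_def pv_def by (simp add: vec_eq_iff)

lemma Lf_gderiv: "GDERIV (Lf s b) z :> (Bop s (snd z), Bop s (fst z) - b)"
proof -
  have d1: "((\<lambda>z. Bop s (fst z)) has_derivative (\<lambda>h. Bop s (fst h))) (at z)"
    using bounded_linear.has_derivative[OF Bop_bl has_derivative_fst[OF has_derivative_ident]] .
  have d2: "((\<lambda>z. inner b (snd z)) has_derivative (\<lambda>h. inner b (snd h))) (at z)"
    using bounded_linear.has_derivative[OF bounded_linear_inner_right has_derivative_snd[OF has_derivative_ident]] .
  have d3: "((\<lambda>z. inner (Bop s (fst z)) (snd z)) has_derivative
        (\<lambda>h. inner (Bop s (fst z)) (snd h) + inner (Bop s (fst h)) (snd z))) (at z)"
    using has_derivative_inner[OF d1 has_derivative_snd[OF has_derivative_ident]] .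
  have "((\<lambda>z. inner (Bop s (fst z)) (snd z) - inner b (snd z)) has_derivative
        (\<lambda>h. inner (Bop s (fst z)) (snd h) + inner (Bop s (fst h)) (snd z) - inner b (snd h))) (at z)"
    using has_derivative_diff[OF d3 d2] .
  moreover have "(\<lambda>h. inner (Bop s (fst z)) (snd h) + inner (Bop s (fst h)) (snd z) - inner b (snd h))
     = (\<lambda>h. inner h (Bop s (snd z), Bop s (fst z) - b))"
    by (auto simp: fun_eq_iff inner_prod_def Bop_sym inner_diff_left inner_diff_right inner_commute; metis Bop_sym inner_commute)
  ultimately show ?thesis unfolding gderiv_def Lf_def by simp
qed

lemma grad_eq:
  fixes f :: "'a::real_inner \<Rightarrow> real"
  assumes "GDERIV f z :> g" shows "grad f z = g"
  unfolding grad_def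
proof (rule some_equality)
  fix g' assume "GDERIV f z :> g'"
  then have "(\<lambda>h. h \<bullet> g') = (\<lambda>h. h \<bullet> g)"
    using assms unfolding gderiv_def by (rule has_derivative_unique)
  then have "(g' - g) \<bullet> g' = (g' - g) \<bullet> g" by metis
  then have "(g' - g) \<bullet> (g' - g) = 0" by (simp add: inner_diff_right)
  then show "g' = g" by simp
qed fact

lemma Lf_grad: "grad (Lf s b) z = (Bop s (snd z), Bop s (fst z) - b)"
  by (rule grad_eq[OF Lf_gderiv])

lemma Lf_diff: "Lf s b differentiable (at z)"
  using Lf_gderiv unfolding gderiv_def by (rule differentiableI)

lemma alg_iter0: "alg_iter A L z0 0 = z0"
  by (simp add: alg_iter_def)

lemma span_inv:
  fixes A :: "'n::finite algorithm"
  assumes sep: "alg_sep A"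
  shows "fst (alg_iter A (Lf s b) 0 i) \<in> span {pv s b l | l. odd l \<and> l < i} \<and>
         snd (alg_iter A (Lf s b) 0 i) \<in> span {pv s b l | l. even l \<and> l < i}"
proof (induction i rule: less_induct)
  case (less i)
  let ?z = "alg_iter A (Lf s b) 0"
  show ?case
  proof (cases "i = 0")
    case True then show ?thesis by (simp add: alg_iter0 span_zero)
  next
    case False
    then have i1: "i \<ge> 1" by simp
    have S: "fst (?z i) - fst (0::'n pt) \<in> span {fst (grad (Lf s b) (?z l)) | l. l < i} \<and>
             snd (?z i) - snd (0::'n pt) \<in> span {snd (grad (Lf s b) (?z l)) | l. l < i}"
      using sep i1 Lf_diff unfolding alg_sep_def by blast
    have lin: "linear (Bop s)" by (rule Bop_linear)
    have A1: "{fst (grad (Lf s b) (?z l)) | l. l < i} \<subseteq> span {pv s b l | l. odd l \<and> l < i}"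
    proof safe
      fix l assume li: "l < i"
      have "snd (?z l) \<in> span {pv s b l' | l'. even l' \<and> l' < l}" using less li by blast
      then have "Bop s (snd (?z l)) \<in> Bop s ` span {pv s b l' | l'. even l' \<and> l' < l}" by blast
      also have "\<dots> = span (Bop s ` {pv s b l' | l'. even l' \<and> l' < l})"
        by (rule span_linear_image[OF lin, symmetric])
      also have "\<dots> \<subseteq> span {pv s b l | l. odd l \<and> l < i}"
      proof (rule span_mono)
        show "Bop s ` {pv s b l' | l'. even l' \<and> l' < l} \<subseteq> {pv s b l | l. odd l \<and> l < i}"
        proof
          fix x assume "x \<in> Bop s ` {pv s b l' | l'. even l' \<and> l' < l}"
          then obtain l' where "even l'" "l' < l" "x = Bop s (pv s b l')" by blast
          then show "x \<in> {pv s b l | l. odd l \<and> l < i}"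
            using li by (auto simp: Bop_pv intro!: exI[of _ "Suc l'"])
        qed
      qed
      finally show "fst (grad (Lf s b) (?z l)) \<in> span {pv s b l | l. odd l \<and> l < i}"
        by (simp add: Lf_grad)
    qed
    have A2: "{snd (grad (Lf s b) (?z l)) | l. l < i} \<subseteq> span {pv s b l | l. even l \<and> l < i}"
    proof safe
      fix l assume li: "l < i"
      have "fst (?z l) \<in> span {pv s b l' | l'. odd l' \<and> l' < l}" using less li by blast
      then have "Bop s (fst (?z l)) \<in> Bop s ` span {pv s b l' | l'. odd l' \<and> l' < l}" by blast
      also have "\<dots> = span (Bop s ` {pv s b l' | l'. odd l' \<and> l' < l})"
        by (rule span_linear_image[OF lin, symmetric])
      also have "\<dots> \<subseteq> span {pv s b l | l. even l \<and> l < i}"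
      proof (rule span_mono)
        show "Bop s ` {pv s b l' | l'. odd l' \<and> l' < l} \<subseteq> {pv s b l | l. even l \<and> l < i}"
        proof
          fix x assume "x \<in> Bop s ` {pv s b l' | l'. odd l' \<and> l' < l}"
          then obtain l' where "odd l'" "l' < l" "x = Bop s (pv s b l')" by blast
          then show "x \<in> {pv s b l | l. even l \<and> l < i}"
            using li by (auto simp: Bop_pv intro!: exI[of _ "Suc l'"])
        qed
      qed
      finally have "Bop s (fst (?z l)) \<in> span {pv s b l | l. even l \<and> l < i}" .
      moreover have "b \<in> span {pv s b l | l. even l \<and> l < i}"
      proof (rule span_base)
        have "pv s b 0 = b" by (simp add: pv_def vec_eq_iff)
        then show "b \<in> {pv s b l | l. even l \<and> l < i}" using i1 by (auto intro!: exI[of _ 0])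
      qed
      ultimately show "snd (grad (Lf s b) (?z l)) \<in> span {pv s b l | l. even l \<and> l < i}"
        by (simp add: Lf_grad span_diff)
    qed
    have "span {fst (grad (Lf s b) (?z l)) | l. l < i} \<subseteq> span {pv s b l | l. odd l \<and> l < i}"
      using span_mono[OF A1] by (simp add: span_span)
    moreover have "span {snd (grad (Lf s b) (?z l)) | l. l < i} \<subseteq> span {pv s b l | l. even l \<and> l < i}"
      using span_mono[OF A2] by (simp add: span_span)
    ultimately show ?thesis using S by auto
  qed
qed

lemma sum_RR: "(\<Sum>a\<in>UNIV. (R * R) * (v $ a * v $ a)) = (R * norm (v::real^'n))^2"
proof -
  have "(R * norm v)^2 = (R * R) * (norm v)^2" by (simp only: power_mult_distrib power2_eq_square[of R])
  also have "\<dots> = (R * R) * (\<Sum>a\<in>UNIV. v $ a * v $ a)" unfolding power2_norm_eq_inner inner_vec_def inner_real_def by (rule refl)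
  finally show ?thesis by (simp only: sum_distrib_left)
qed

lemma norm_Bop:
  assumes "\<And>a. \<bar>s a\<bar> \<le> R"
  shows "norm (Bop s v) \<le> R * norm v"
proof -
  have R0: "0 \<le> R" using assms[of undefined] by linarith
  have "(norm (Bop s v))^2 = (\<Sum>a\<in>UNIV. (s a * v $ a) * (s a * v $ a))"
    unfolding power2_norm_eq_inner inner_vec_def Bop_def by simp
  also have "\<dots> \<le> (\<Sum>a\<in>UNIV. (R * R) * (v $ a * v $ a))"
  proof (rule sum_mono)
    fix a
    have h1: "\<bar>s a * v $ a\<bar> \<le> R * \<bar>v $ a\<bar>" using assms[of a] by (simp add: abs_mult mult_right_mono)
    have "(s a * v $ a) * (s a * v $ a) = \<bar>s a * v $ a\<bar> * \<bar>s a * v $ a\<bar>" by (simp only: abs_mult_self_eq)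
    also have "\<dots> \<le> (R * \<bar>v $ a\<bar>) * (R * \<bar>v $ a\<bar>)" by (rule mult_mono[OF h1 h1]) (auto simp: R0)
    also have "\<dots> = (R * R) * (\<bar>v $ a\<bar> * \<bar>v $ a\<bar>)" by (simp only: mult_ac)
    also have "\<dots> = (R * R) * (v $ a * v $ a)" by (simp only: abs_mult_self_eq)
    finally show "(s a * v $ a) * (s a * v $ a) \<le> (R * R) * (v $ a * v $ a)" .
  qed
  also have "\<dots> = (R * norm v)^2" by (rule sum_RR)
  finally have sq: "(norm (Bop s v))^2 \<le> (R * norm v)^2" .
  show ?thesis by (rule power2_le_imp_le[OF sq]) (simp add: R0)
qed

lemma norm_pair_sq: "(norm (u, v))^2 = (norm u)^2 + (norm v)^2"
  by (simp add: norm_prod_def)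

lemma sqrt_help:
  assumes "0 < (x::real)"
  shows "sgn c * sqrt (\<bar>c\<bar> / x) * sqrt (\<bar>c\<bar> * x) = c"
proof -
  have e: "(\<bar>c\<bar> / x) * (\<bar>c\<bar> * x) = \<bar>c\<bar>^2"
    using assms by (simp add: power2_eq_square)
  have "sqrt (\<bar>c\<bar> / x) * sqrt (\<bar>c\<bar> * x) = sqrt ((\<bar>c\<bar> / x) * (\<bar>c\<bar> * x))"
    by (rule real_sqrt_mult[symmetric])
  also have "\<dots> = sqrt (\<bar>c\<bar>^2)" by (simp only: e)
  also have "\<dots> = \<bar>c\<bar>" by simp
  finally have "sqrt (\<bar>c\<bar> / x) * sqrt (\<bar>c\<bar> * x) = \<bar>c\<bar>" .
  then show ?thesis by (simp only: mult.assoc sgn_mult_abs)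
qed

lemma sum_UNIV_reindex:
  fixes h :: "nat \<Rightarrow> 'n::finite" and f :: "'n \<Rightarrow> real"
  assumes inj: "inj_on h {..m}" and z: "\<And>a. a \<notin> h ` {..m} \<Longrightarrow> f a = 0"
  shows "sum f UNIV = (\<Sum>i\<le>m. f (h i))"
proof -
  have "sum f UNIV = sum f (h ` {..m})"
    by (rule sum.mono_neutral_right) (use z in auto)
  also have "\<dots> = (\<Sum>i\<le>m. f (h i))" by (rule sum.reindex_cong[OF inj refl refl])
  finally show ?thesis .
qed

lemma convex_on_affine:
  assumes "\<And>u v x y. u + v = 1 \<Longrightarrow> f (u *\<^sub>R x + v *\<^sub>R y) = u * f x + v * f y"
  shows "convex_on UNIV f"
  unfolding convex_on_def using assms by simp

lemma concave_on_affine: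
  assumes "\<And>u v x y. u + v = 1 \<Longrightarrow> f (u *\<^sub>R x + v *\<^sub>R y) = u * f x + v * f y"
  shows "concave_on UNIV f"
  unfolding concave_on_def by (rule convex_on_affine) (simp add: assms algebra_simps)

lemma Lf_cc: "convex_concave (Lf s b)"
  unfolding convex_concave_def
proof (intro conjI allI)
  have lin: "linear (Bop s)" by (rule Bop_linear)
  fix y
  show "convex_on UNIV (\<lambda>x. Lf s b (x, y))"
  proof (rule convex_on_affine)
    fix u v :: real and x1 x2 :: "real^'a" assume uv: "u + v = 1"
    have "Bop s (u *\<^sub>R x1 + v *\<^sub>R x2) = u *\<^sub>R Bop s x1 + v *\<^sub>R Bop s x2"
      using lin by (simp add: linear_add linear_scale)
    then have "Lf s b (u *\<^sub>R x1 + v *\<^sub>R x2, y) = u * inner (Bop s x1) y + v * inner (Bop s x2) y - inner b y"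
      by (simp add: Lf_def inner_add_left)
    also have "\<dots> = u * Lf s b (x1, y) + v * Lf s b (x2, y)"
      using uv by (simp add: Lf_def algebra_simps) (metis distrib_right mult_1 )
    finally show "Lf s b (u *\<^sub>R x1 + v *\<^sub>R x2, y) = u * Lf s b (x1, y) + v * Lf s b (x2, y)" .
  qed
next
  fix x
  show "concave_on UNIV (\<lambda>y. Lf s b (x, y))"
  proof (rule concave_on_affine)
    fix u v :: real and y1 y2 :: "real^'a" assume uv: "u + v = 1"
    show "Lf s b (x, u *\<^sub>R y1 + v *\<^sub>R y2) = u * Lf s b (x, y1) + v * Lf s b (x, y2)"
      by (simp add: Lf_def inner_add_right algebra_simps)
  qed
qed

lemma Lf_lip:
  assumes s: "\<And>a. \<bar>s a\<bar> \<le> R"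
  shows "R-lipschitz_on UNIV (saddle_op (Lf s b))"
proof -
  have R0: "0 \<le> R" using s[of undefined] by linarith
  have lin: "linear (Bop s)" by (rule Bop_linear)
  have so: "saddle_op (Lf s b) z = (Bop s (snd z), - (Bop s (fst z) - b))" for z
    by (simp add: saddle_op_def Lf_grad)
  show ?thesis unfolding lipschitz_on_def
  proof (intro conjI R0 ballI)
    fix z1 z2 :: "'a pt"
    define d where "d = z1 - z2"
    have diff: "saddle_op (Lf s b) z1 - saddle_op (Lf s b) z2 = (Bop s (snd d), - Bop s (fst d))"
      unfolding so d_def using lin by (simp add: linear_diff)
    have "(norm (saddle_op (Lf s b) z1 - saddle_op (Lf s b) z2))^2 = (norm (Bop s (snd d)))^2 + (norm (Bop s (fst d)))^2"
      unfolding diff norm_pair_sq by simp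
    also have "\<dots> \<le> (R * norm (snd d))^2 + (R * norm (fst d))^2"
      by (intro add_mono power_mono norm_Bop s) simp_all
    also have "\<dots> = (R * norm d)^2"
      by (simp add: power_mult_distrib norm_prod_def algebra_simps)
    finally have sq: "(norm (saddle_op (Lf s b) z1 - saddle_op (Lf s b) z2))^2 \<le> (R * norm d)^2" .
    have "norm (saddle_op (Lf s b) z1 - saddle_op (Lf s b) z2) \<le> R * norm d"
      by (rule power2_le_imp_le[OF sq]) (simp add: R0)
    then show "dist (saddle_op (Lf s b) z1) (saddle_op (Lf s b) z2) \<le> R * dist z1 z2"
      by (simp add: dist_norm d_def)
  qed
qed

theorem corollary3:
  fixes R D :: real and k :: nat and A :: "'n::finite algorithm"
  assumes "R > 0" and "D > 0" and "CARD('n) \<ge> k + 2" and "alg_sep A"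
  shows "\<forall>c < R^2 * D^2 / (2 * real (k div 2) + 1)^2.
           \<exists>L z0 zs. R_smooth R L \<and> convex_concave L \<and> saddle_point L zs \<and>
             norm (z0 - zs) \<le> D \<and> (norm (grad L (alg_iter A L z0 k)))^2 > c"
proof (intro allI impI)
  fix c assume c: "c < R^2 * D^2 / (2 * real (k div 2) + 1)^2"
  note Rp = \<open>R > 0\<close> and Dp = \<open>D > 0\<close>
  define m where "m = k div 2"
  obtain h :: "nat \<Rightarrow> 'n" where hb: "bij_betw h {0..<CARD('n)} UNIV"
    using ex_bij_betw_nat_finite[of "UNIV :: 'n set"] by auto
  have hinj: "inj_on h {..m}"
    by (rule inj_on_subset[OF bij_betw_imp_inj_on[OF hb]]) (use assms(3) in \<open>auto simp: m_def\<close>)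
  define I where "I = h ` {..m}"
  define g where "g = inv_into {..m} h"
  have gh: "g (h i) = i" if "i \<le> m" for i
    unfolding g_def using hinj that by (simp add: inv_into_f_f)
  have gI: "g a \<le> m" "h (g a) = a" if "a \<in> I" for a
    using that gh unfolding I_def by auto
  define C where "C = 2 * real m + 1"
  have Cp: "C > 0" unfolding C_def by simp
  define \<gamma> where "\<gamma> = R * D / sqrt C"
  have \<gamma>2: "\<gamma>^2 = R^2 * D^2 / C"
    unfolding \<gamma>_def using Cp by (simp add: power_divide power_mult_distrib)
  define sv where "sv a = (if a \<in> I then R * xn m (g a) else R)" for a
  define bv :: "real^'n" where "bv = (\<chi> a. if a \<in> I then \<gamma> * sqrt (\<bar>cc m (g a)\<bar> * xn m (g a)) else 0)"
  define wv :: "real^'n" where "wv = (\<chi> a. if a \<in> I then sgn (cc m (g a)) * sqrt (\<bar>cc m (g a)\<bar> / xn m (g a)) else 0)"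
  define xs :: "real^'n" where "xs = (\<chi> a. bv $ a / sv a)"
  define L where "L = Lf sv bv"
  have sv_pos: "0 < sv a" for a
    unfolding sv_def using Rp xn_pos[OF gI(1)] by auto
  have sv_le: "\<bar>sv a\<bar> \<le> R" for a
    unfolding sv_def using Rp xn_pos[OF gI(1)] xn_le1[of m "g a"]
    by (auto simp: abs_of_pos mult_left_le)

  have wpv: "inner wv (pv sv bv p) = \<gamma> * R^p * (\<Sum>i\<le>m. cc m i * xn m i ^ p)" for p
  proof -
    have "inner wv (pv sv bv p) = (\<Sum>a\<in>UNIV. wv $ a * (sv a ^ p * bv $ a))"
      unfolding inner_vec_def pv_def by simp
    also have "\<dots> = (\<Sum>i\<le>m. wv $ h i * (sv (h i) ^ p * bv $ h i))"
      by (rule sum_UNIV_reindex[OF hinj]) (simp add: wv_def I_def)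
    also have "\<dots> = (\<Sum>i\<le>m. \<gamma> * R^p * (cc m i * xn m i ^ p))"
    proof (rule sum.cong[OF refl])
      fix i assume i: "i \<in> {..m}"
      then have hi: "h i \<in> I" and gi: "g (h i) = i" using gh unfolding I_def by auto
      have "wv $ h i * (sv (h i) ^ p * bv $ h i)
          = \<gamma> * R^p * xn m i ^ p * (sgn (cc m i) * sqrt (\<bar>cc m i\<bar> / xn m i) * sqrt (\<bar>cc m i\<bar> * xn m i))"
        unfolding wv_def bv_def sv_def using hi gi by (simp add: power_mult_distrib algebra_simps)
      also have "\<dots> = \<gamma> * R^p * (cc m i * xn m i ^ p)"
        using sqrt_help[OF xn_pos, of i m "cc m i"] i by simp
      finally show "wv $ h i * (sv (h i) ^ p * bv $ h i) = \<gamma> * R^p * (cc m i * xn m i ^ p)" .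
    qed
    also have "\<dots> = \<gamma> * R^p * (\<Sum>i\<le>m. cc m i * xn m i ^ p)"
      by (simp add: sum_distrib_left)
    finally show ?thesis .
  qed
  have wpv_even: "inner wv (pv sv bv (2 * q)) = (if q = 0 then \<gamma> else 0)" if "q \<le> m" for q
  proof -
    have "(\<Sum>i\<le>m. cc m i * xn m i ^ (2 * q)) = (\<Sum>i\<le>m. cc m i * tn m i ^ q)"
      by (simp add: tn_def power_mult)
    then show ?thesis using wpv[of "2 * q"] cc_moment[OF that] by simp
  qed
  have pv0: "pv sv bv 0 = bv" by (simp add: pv_def vec_eq_iff)
  have wb: "inner wv bv = \<gamma>" using wpv_even[of 0] pv0 by simp

  have nw: "(norm wv)^2 = C"
  proof -
    have "(norm wv)^2 = (\<Sum>a\<in>UNIV. wv $ a * wv $ a)"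
      unfolding power2_norm_eq_inner inner_vec_def inner_real_def by (rule refl)
    also have "\<dots> = (\<Sum>i\<le>m. wv $ h i * wv $ h i)"
      by (rule sum_UNIV_reindex[OF hinj]) (simp add: wv_def I_def)
    also have "\<dots> = (\<Sum>i\<le>m. \<bar>cc m i\<bar> / xn m i)"
    proof (rule sum.cong[OF refl])
      fix i assume i: "i \<in> {..m}"
      then have hi: "h i \<in> I" and gi: "g (h i) = i" using gh unfolding I_def by auto
      have xp: "0 < xn m i" using xn_pos i by simp
      have wvi: "wv $ h i = sgn (cc m i) * sqrt (\<bar>cc m i\<bar> / xn m i)"
        unfolding wv_def using hi gi by simp
      have "wv $ h i * wv $ h i = (sgn (cc m i))^2 * (sqrt (\<bar>cc m i\<bar> / xn m i))^2"
        unfolding wvi power2_eq_square by (simp only: mult_ac)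
      also have "\<dots> = (sgn (cc m i))^2 * (\<bar>cc m i\<bar> / xn m i)"
        using xp by simp
      also have "\<dots> = \<bar>cc m i\<bar> / xn m i"
        by (cases "cc m i = 0") (simp_all add: sgn_if)
      finally show "wv $ h i * wv $ h i = \<bar>cc m i\<bar> / xn m i" .
    qed
    also have "\<dots> = C" unfolding C_def by (rule sum_abs_cc)
    finally show ?thesis .
  qed

  have nxs: "norm xs = D"
  proof -
    have "(norm xs)^2 = (\<Sum>a\<in>UNIV. xs $ a * xs $ a)"
      unfolding power2_norm_eq_inner inner_vec_def inner_real_def by (rule refl)
    also have "\<dots> = (\<Sum>i\<le>m. xs $ h i * xs $ h i)"
      by (rule sum_UNIV_reindex[OF hinj]) (simp add: xs_def bv_def I_def)
    also have "\<dots> = (\<Sum>i\<le>m. \<gamma>^2 / R^2 * (\<bar>cc m i\<bar> / xn m i))"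
    proof (rule sum.cong[OF refl])
      fix i assume i: "i \<in> {..m}"
      then have hi: "h i \<in> I" and gi: "g (h i) = i" using gh unfolding I_def by auto
      have xp: "0 < xn m i" using xn_pos i by simp
      have "xs $ h i * xs $ h i = (\<gamma> * sqrt (\<bar>cc m i\<bar> * xn m i))^2 / (R * xn m i)^2"
        unfolding xs_def bv_def sv_def using hi gi by (simp add: power2_eq_square)
      also have "\<dots> = \<gamma>^2 * (\<bar>cc m i\<bar> * xn m i) / (R^2 * xn m i ^ 2)"
        using xp by (simp add: power_mult_distrib)
      also have "\<dots> = \<gamma>^2 / R^2 * (\<bar>cc m i\<bar> / xn m i)"
        using xp Rp by (simp add: field_simps power2_eq_square)
      finally show "xs $ h i * xs $ h i = \<gamma>^2 / R^2 * (\<bar>cc m i\<bar> / xn m i)" .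
    qed
    also have "\<dots> = \<gamma>^2 / R^2 * C"
      unfolding C_def sum_distrib_left[symmetric] sum_abs_cc by (rule refl)
    also have "\<dots> = D^2"
      unfolding \<gamma>2 using Rp Cp by (simp add: field_simps)
    finally have "(norm xs)^2 = D^2" .
    then show ?thesis using Dp by (simp add: power2_eq_iff_nonneg)
  qed

  have Bxs: "Bop sv xs = bv"
    unfolding Bop_def xs_def vec_eq_iff using sv_pos by (simp add: less_imp_neq[symmetric])

  have smooth: "R_smooth R L"
  proof -
    have "\<And>a. \<bar>sv a\<bar> \<le> R" by (rule sv_le)
    then have "R-lipschitz_on UNIV (saddle_op (Lf sv bv))" by (rule Lf_lip)
    then show ?thesis unfolding R_smooth_def L_def using Lf_diff by blast
  qed
  have ccv: "convex_concave L" unfolding L_def by (rule Lf_cc)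
  have sp: "saddle_point L (xs, 0)"
    unfolding saddle_point_def L_def Lf_def by (simp add: Bxs)
  have nz: "norm ((0::'n pt) - (xs, 0)) \<le> D"
    using nxs Dp by (simp add: norm_prod_def)

  define zk where "zk = alg_iter A L 0 k"
  have fz: "fst zk \<in> span {pv sv bv l | l. odd l \<and> l < k}"
    using span_inv[OF assms(4), of sv bv k] unfolding zk_def L_def by blast
  have lin: "linear (Bop sv)" by (rule Bop_linear)
  have "Bop sv (fst zk) \<in> Bop sv ` span {pv sv bv l | l. odd l \<and> l < k}" using fz by blast
  also have "\<dots> = span (Bop sv ` {pv sv bv l | l. odd l \<and> l < k})"
    by (rule span_linear_image[OF lin, symmetric])
  also have "\<dots> \<subseteq> {x. wv \<bullet> x = 0}"
  proof (rule span_minimal[OF _ subspace_hyperplane])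
    show "Bop sv ` {pv sv bv l | l. odd l \<and> l < k} \<subseteq> {x. wv \<bullet> x = 0}"
    proof
      fix x assume "x \<in> Bop sv ` {pv sv bv l | l. odd l \<and> l < k}"
      then obtain l where l: "odd l" "l < k" "x = Bop sv (pv sv bv l)" by blast
      obtain q where q: "Suc l = 2 * q" using l(1) by (metis dvd_def even_Suc)
      have "q \<le> m" "q \<noteq> 0" using q l(2) unfolding m_def by auto
      then have "inner wv (pv sv bv (Suc l)) = 0" using wpv_even[of q] q by simp
      then show "x \<in> {x. wv \<bullet> x = 0}" using l(3) by (simp add: Bop_pv)
    qed
  qed
  finally have wB: "inner wv (Bop sv (fst zk)) = 0" by simp
  define r where "r = Bop sv (fst zk) - bv"
  have wr: "inner wv r = - \<gamma>" unfolding r_def by (simp add: inner_diff_right wB wb)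
  have CS: "(inner wv r)^2 \<le> (norm wv)^2 * (norm r)^2"
    using Cauchy_Schwarz_ineq[of wv r] by (simp add: power2_norm_eq_inner)
  then have "\<gamma>^2 \<le> C * (norm r)^2" using wr nw by simp
  then have nr: "R^2 * D^2 / C^2 \<le> (norm r)^2"
    using Cp unfolding \<gamma>2 by (simp add: field_simps power2_eq_square)
  have gz: "grad L zk = (Bop sv (snd zk), r)" unfolding L_def r_def by (simp add: Lf_grad)
  have "(norm r)^2 \<le> (norm (grad L zk))^2"
    unfolding gz norm_pair_sq by simp
  moreover have "c < R^2 * D^2 / C^2" using c unfolding C_def m_def .
  ultimately have "(norm (grad L (alg_iter A L 0 k)))^2 > c"
    using nr unfolding zk_def by linarith
  then show "\<exists>L z0 zs. R_smooth R L \<and> convex_concave L \<and> saddle_point L zs \<and>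
             norm (z0 - zs) \<le> D \<and> (norm (grad L (alg_iter A L z0 k)))^2 > c"
    using smooth ccv sp nz by blast
qed

end
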